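(* Let $G$ be a non-discrete compact group with normalized Haar measure $\nu$. For every neighborhood $U$ of the identity there exists a finite set $H\subseteq G$ such that (1) $HU=G$, and (2) for every $I\subseteq H$, $\nu(IU)\ge \frac{|I|}{|H|}$. *)

theory Defs
  imports "HOL-Probability.Probability"
begin

text \<open>A compact group is modelled as a type of class topological_group_add
(group operation written additively, NOT assumed commutative) which is
Hausdorff and compact. The identity is 0.\<close>

definition discrete_top :: "'a::topological_space itself \<Rightarrow> bool" where
  "discrete_top _ \<longleftrightarrow> (\<forall>S::'a set. open S)"

definition normalized_haar :: "'a::topological_group_add measure \<Rightarrow> bool" where
  "normalized_haar \<nu> \<longleftrightarrow>
     prob_space \<nu> \<and> sets \<nu> = sets borel \<and>
     (\<forall>g. \<forall>A \<in> sets borel. emeasure \<nu> ((\<lambda>x. g + x) ` A) = emeasure \<nu> A) \<and>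
     (\<forall>B \<in> sets borel. emeasure \<nu> B = (INF V \<in> {V. B \<subseteq> V \<and> open V}. emeasure \<nu> V)) \<and>
     (\<forall>V. open V \<longrightarrow> emeasure \<nu> V = (SUP K \<in> {K. K \<subseteq> V \<and> compact K}. emeasure \<nu> K))"

end

theory Submission
  imports Defs
begin


lemma open_transl:
  fixes S :: "'a::topological_group_add set"
  assumes "open S" shows "open ((\<lambda>x. a + x) ` S)"
proof -
  have "(\<lambda>x. a + x) ` S = (\<lambda>x. -a + x) -` S"
  proof (intro set_eqI iffI)
    fix x assume "x \<in> (\<lambda>x. a + x) ` S" then show "x \<in> (\<lambda>x. -a + x) -` S" by auto
  next
    fix x assume "x \<in> (\<lambda>x. -a + x) -` S"
    then have "-a + x \<in> S" by simp
    moreover have "x = a + (-a + x)" by simp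
    ultimately show "x \<in> (\<lambda>x. a + x) ` S" by blast
  qed
  moreover have "continuous_on UNIV (\<lambda>x::'a. -a + x)"
    by (intro continuous_intros)
  ultimately show ?thesis using assms by (simp add: open_vimage)
qed

lemma open_neg:
  fixes S :: "'a::topological_group_add set"
  assumes "open S" shows "open {x. -x \<in> S}"
proof -
  have "continuous_on UNIV (\<lambda>x::'a. -x)"
    by (intro continuous_intros)
  then show ?thesis using assms open_vimage[of S "\<lambda>x. -x"] by (simp add: vimage_def)
qed

lemma half_nbhd:
  fixes U :: "'a::topological_group_add set"
  assumes "open U" "0 \<in> U"
  shows "\<exists>V. open V \<and> 0 \<in> V \<and> (\<forall>a\<in>V. \<forall>b\<in>V. a + b \<in> U)"
proof -
  have "((\<lambda>x. fst x + snd x) \<longlongrightarrow> (0::'a) + 0) (nhds 0 \<times>\<^sub>F nhds 0)"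
    by (rule tendsto_add_Pair)
  then have "eventually (\<lambda>x. fst x + snd x \<in> U) (nhds (0::'a) \<times>\<^sub>F nhds 0)"
    using assms by (simp add: tendsto_def)
  then obtain Q where Q: "eventually Q (nhds (0::'a))" "\<And>x y. Q x \<Longrightarrow> Q y \<Longrightarrow> x + y \<in> U"
    unfolding eventually_prod_same by auto
  from Q(1) obtain V where V: "open V" "0 \<in> V" "\<forall>x\<in>V. Q x" unfolding eventually_nhds by blast
  have "\<forall>a\<in>V. \<forall>b\<in>V. a + b \<in> U" using V(3) Q(2) by simp
  then show ?thesis using V(1,2) by blast
qed

lemma small_nbhd:
  fixes U :: "'a::topological_group_add set"
  assumes "open U" "0 \<in> U"
  shows "\<exists>W. open W \<and> 0 \<in> W \<and> (\<forall>x\<in>W. -x \<in> W) \<and>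
     (\<forall>a\<in>W. \<forall>b\<in>W. \<forall>c\<in>W. \<forall>d\<in>W. \<forall>e\<in>W. a + (b + (c + (d + e))) \<in> U)"
proof -
  obtain V1 where V1: "open V1" "0 \<in> V1" "\<forall>a\<in>V1. \<forall>b\<in>V1. a + b \<in> U"
    using half_nbhd[OF assms] by blast
  obtain V2 where V2: "open V2" "0 \<in> V2" "\<forall>a\<in>V2. \<forall>b\<in>V2. a + b \<in> V1"
    using half_nbhd[OF V1(1,2)] by blast
  obtain V3 where V3: "open V3" "0 \<in> V3" "\<forall>a\<in>V3. \<forall>b\<in>V3. a + b \<in> V2"
    using half_nbhd[OF V2(1,2)] by blast
  define W where "W = V3 \<inter> {x. -x \<in> V3}"
  have "open W" unfolding W_def using V3(1) open_neg[OF V3(1)] by auto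
  moreover have "0 \<in> W" unfolding W_def using V3(2) by simp
  moreover have "\<forall>x\<in>W. -x \<in> W" unfolding W_def by auto
  moreover have five: "a + (b + (c + (d + e))) \<in> U" if "a\<in>W" "b\<in>W" "c\<in>W" "d\<in>W" "e\<in>W" for a b c d e
  proof -
    have "a \<in> V3" "b \<in> V3" "c \<in> V3" "d \<in> V3" "e \<in> V3" using that unfolding W_def by auto
    then have "a + b \<in> V2" "c + d \<in> V2" "e + 0 \<in> V2" "0 + 0 \<in> V2" using V3(2,3) by auto
    then have "(a + b) + (c + d) \<in> V1" "(e + 0) + (0 + 0) \<in> V1" using V2(3) by auto
    then have "((a + b) + (c + d)) + ((e + 0) + (0 + 0)) \<in> U" using V1(3) by auto
    then show ?thesis by (simp add: add.assoc)
  qed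
  moreover have "\<forall>a\<in>W. \<forall>b\<in>W. \<forall>c\<in>W. \<forall>d\<in>W. \<forall>e\<in>W. a + (b + (c + (d + e))) \<in> U"
    by (intro ballI five)
  ultimately show ?thesis by (intro exI[of _ W] conjI)
qed

lemma open_infinite:
  fixes A :: "'a::{topological_group_add,t2_space} set"
  assumes nd: "\<not> discrete_top TYPE('a)" and oA: "open A" and aA: "a \<in> A"
  shows "infinite A"
proof
  assume fin: "finite A"
  have cl: "closed (A - {a})" using fin by (simp add: finite_imp_closed)
  have "open (A - (A - {a}))" by (rule open_Diff[OF oA cl])
  moreover have "A - (A - {a}) = {a}" using aA by auto
  ultimately have oa: "open {a}" by simp
  have og: "open {g::'a}" for g
  proof -
    have "(\<lambda>x. (g - a) + x) ` {a} = {g}" by simp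
    then show ?thesis using open_transl[OF oa, of "g - a"] by simp
  qed
  have "open S" for S :: "'a set"
  proof -
    have "S = (\<Union>g\<in>S. {g})" by auto
    then show ?thesis using og by (metis open_UN)
  qed
  then show False using nd unfolding discrete_top_def by blast
qed

lemma choose_disjoint:
  assumes "finite X" "\<And>x. x \<in> X \<Longrightarrow> infinite (A x)"
  shows "\<exists>B. (\<forall>x\<in>X. B x \<subseteq> A x \<and> finite (B x) \<and> card (B x) = k x) \<and>
             (\<forall>x\<in>X. \<forall>y\<in>X. x \<noteq> y \<longrightarrow> B x \<inter> B y = {})"
  using assms
proof (induction X rule: finite_induct)
  case empty then show ?case by simp
next
  case (insert a X)
  have IHp: "\<And>x. x \<in> X \<Longrightarrow> infinite (A x)" by (rule insert.prems) simp
  have ex: "\<exists>B. (\<forall>x\<in>X. B x \<subseteq> A x \<and> finite (B x) \<and> card (B x) = k x) \<and>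
             (\<forall>x\<in>X. \<forall>y\<in>X. x \<noteq> y \<longrightarrow> B x \<inter> B y = {})" by (rule insert.IH[OF IHp])
  then obtain B where B: "\<forall>x\<in>X. B x \<subseteq> A x \<and> finite (B x) \<and> card (B x) = k x"
    "\<forall>x\<in>X. \<forall>y\<in>X. x \<noteq> y \<longrightarrow> B x \<inter> B y = {}" by (elim exE conjE)
  define F where "F = (\<Union>x\<in>X. B x)"
  have "finite F" unfolding F_def using B insert.hyps(1) by simp
  have "infinite (A a)" by (rule insert.prems) simp
  then have inf: "infinite (A a - F)" using \<open>finite F\<close> by (rule Diff_infinite_finite[rotated])
  obtain D where D: "finite D" "card D = k a" "D \<subseteq> A a - F"
    using infinite_arbitrarily_large[OF inf, of "k a"] by blast
  define B' where "B' = B(a := D)"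
  have P1: "B' x \<subseteq> A x \<and> finite (B' x) \<and> card (B' x) = k x" if "x \<in> insert a X" for x
  proof (cases "x = a")
    case True then show ?thesis using D unfolding B'_def by auto
  next
    case False then have "x \<in> X" using that by auto
    then show ?thesis using B False unfolding B'_def by auto
  qed
  have DF: "D \<inter> B y = {}" if "y \<in> X" for y using D that unfolding F_def by auto
  have P2: "B' x \<inter> B' y = {}" if "x \<in> insert a X" "y \<in> insert a X" "x \<noteq> y" for x y
  proof (cases "x = a")
    case True
    then have "y \<in> X" "y \<noteq> a" using that by auto
    then show ?thesis using DF True unfolding B'_def by auto
  next
    case False
    show ?thesis
    proof (cases "y = a")
      case True
      then have "x \<in> X" using that False by auto
      then show ?thesis using DF True False unfolding B'_def by auto
    next
      case False2: False
      then have "x \<in> X" "y \<in> X" using that False by auto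
      then show ?thesis using B(2) that False False2 unfolding B'_def by auto
    qed
  qed
  have "\<forall>x\<in>insert a X. B' x \<subseteq> A x \<and> finite (B' x) \<and> card (B' x) = k x" using P1 by blast
  moreover have "\<forall>x\<in>insert a X. \<forall>y\<in>insert a X. x \<noteq> y \<longrightarrow> B' x \<inter> B' y = {}" using P2 by blast
  ultimately show ?case by blast
qed

lemma sum_floor_le:
  fixes f :: "'b \<Rightarrow> real"
  assumes "finite A"
  shows "(\<Sum>z\<in>A. \<lfloor>f z\<rfloor>) \<le> \<lfloor>\<Sum>z\<in>A. f z\<rfloor>"
  using assms
proof (induction A rule: finite_induct)
  case empty then show ?case by simp
next
  case (insert a A)
  then have "(\<Sum>z\<in>insert a A. \<lfloor>f z\<rfloor>) = \<lfloor>f a\<rfloor> + (\<Sum>z\<in>A. \<lfloor>f z\<rfloor>)" by simp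
  also have "\<dots> \<le> \<lfloor>f a\<rfloor> + \<lfloor>\<Sum>z\<in>A. f z\<rfloor>" using insert by simp
  also have "\<dots> \<le> \<lfloor>f a + (\<Sum>z\<in>A. f z)\<rfloor>" by (rule le_floor_add)
  also have "\<dots> = \<lfloor>\<Sum>z\<in>insert a A. f z\<rfloor>" using insert by simp
  finally show ?case .
qed

lemma forest_transport:
  fixes X :: "'b set" and c :: "'b \<Rightarrow> real" and par :: "'b \<Rightarrow> 'b" and dep :: "'b \<Rightarrow> nat"
    and N :: nat
  assumes finX: "finite X"
    and parX: "\<And>x. x \<in> X \<Longrightarrow> par x \<in> X"
    and depP: "\<And>x. x \<in> X \<Longrightarrow> dep x > 0 \<Longrightarrow> Suc (dep (par x)) = dep x"
    and cN: "\<And>x. x \<in> X \<Longrightarrow> c x \<ge> 1 / real N"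
    and Npos: "N > 0"
    and root: "\<And>r. r \<in> X \<Longrightarrow> dep r = 0 \<Longrightarrow>
                 (\<Sum>y\<in>{y\<in>X. (par^^dep y) y = r}. c y) * real N \<in> \<int>"
  shows "\<exists>k T. (\<forall>x\<in>X. k x > (0::nat)) \<and>
     (\<forall>x\<in>X. \<forall>y\<in>X. T x y \<ge> (0::real) \<and> (T x y \<noteq> 0 \<longrightarrow> y = x \<or> (par y = x \<and> dep y > 0))) \<and>
     (\<forall>y\<in>X. (\<Sum>x\<in>X. T x y) = 1) \<and>
     (\<forall>x\<in>X. (\<Sum>y\<in>X. T x y * c y) = real (k x) / real N)"
proof -
  define desc where "desc x = {y\<in>X. dep x \<le> dep y \<and> (par^^(dep y - dep x)) y = x}" for x
  define ch where "ch x = {z\<in>X. dep z > 0 \<and> par z = x}" for x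
  define Ts where "Ts x = (\<Sum>y\<in>desc x. c y)" for x
  have pow_dep: "(par^^k) y \<in> X \<and> dep ((par^^k) y) = dep y - k" if "y \<in> X" "k \<le> dep y" for k y
    using that(2)
  proof (induction k)
    case 0 then show ?case using that by simp
  next
    case (Suc k)
    then have IH: "(par^^k) y \<in> X" "dep ((par^^k) y) = dep y - k" by auto
    have "dep ((par^^k) y) > 0" using IH Suc by simp
    then have "Suc (dep (par ((par^^k) y))) = dep ((par^^k) y)" using depP IH by blast
    then show ?case using IH parX by simp
  qed
  have chX: "ch x \<subseteq> X" for x unfolding ch_def by auto
  have descX: "desc x \<subseteq> X" for x unfolding desc_def by auto
  have dep_ch: "dep z = Suc (dep x)" if "z \<in> ch x" for x z
    using that depP unfolding ch_def by force
  have desc_dec: "desc x = insert x (\<Union>z\<in>ch x. desc z)" if xX: "x \<in> X" for x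
  proof (intro equalityI subsetI)
    fix y assume y: "y \<in> desc x"
    show "y \<in> insert x (\<Union>z\<in>ch x. desc z)"
    proof (cases "y = x")
      case True then show ?thesis by simp
    next
      case False
      have yX: "y \<in> X" and le: "dep x \<le> dep y" and eq: "(par^^(dep y - dep x)) y = x"
        using y unfolding desc_def by auto
      have lt: "dep x < dep y" using le eq False by (cases "dep y = dep x") auto
      define z where "z = (par^^(dep y - Suc (dep x))) y"
      have zX: "z \<in> X" and dz: "dep z = Suc (dep x)"
        using pow_dep[OF yX, of "dep y - Suc (dep x)"] lt unfolding z_def by auto
      have "par z = (par^^(Suc (dep y - Suc (dep x)))) y" unfolding z_def by simp
      also have "Suc (dep y - Suc (dep x)) = dep y - dep x" using lt by simp
      finally have pz: "par z = x" using eq by simp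
      have "z \<in> ch x" using zX dz pz unfolding ch_def by simp
      moreover have "y \<in> desc z" unfolding desc_def using yX dz lt z_def by simp
      ultimately show ?thesis by blast
    qed
  next
    fix y assume y: "y \<in> insert x (\<Union>z\<in>ch x. desc z)"
    show "y \<in> desc x"
    proof (cases "y = x")
      case True then show ?thesis using xX unfolding desc_def by simp
    next
      case False
      then obtain z where z: "z \<in> ch x" "y \<in> desc z" using y by auto
      have dz: "dep z = Suc (dep x)" using dep_ch[OF z(1)] .
      have yX: "y \<in> X" and le: "dep z \<le> dep y" and eq: "(par^^(dep y - dep z)) y = z"
        using z(2) unfolding desc_def by auto
      have "(par^^(dep y - dep x)) y = (par^^(Suc (dep y - dep z))) y"
        using dz le by (metis Suc_diff_le diff_Suc_Suc)
      also have "\<dots> = par z" using eq by simp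
      also have "\<dots> = x" using z(1) unfolding ch_def by simp
      finally show ?thesis using yX le dz unfolding desc_def by simp
    qed
  qed
  have disj: "disjoint_family_on desc (ch x)" for x
  proof (unfold disjoint_family_on_def, intro ballI impI)
    fix z z' assume zz: "z \<in> ch x" "z' \<in> ch x" "z \<noteq> z'"
    show "desc z \<inter> desc z' = {}"
    proof (rule ccontr)
      assume "desc z \<inter> desc z' \<noteq> {}"
      then obtain y where "y \<in> desc z" "y \<in> desc z'" by blast
      then have "(par^^(dep y - dep z)) y = z" "(par^^(dep y - dep z')) y = z'"
        unfolding desc_def by auto
      moreover have "dep z = dep z'" using dep_ch zz by simp
      ultimately show False using zz by simp
    qed
  qed
  have notin: "x \<notin> (\<Union>z\<in>ch x. desc z)" for x
  proof
    assume "x \<in> (\<Union>z\<in>ch x. desc z)"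
    then obtain z where "z \<in> ch x" "x \<in> desc z" by blast
    then show False using dep_ch[of z x] unfolding desc_def by simp
  qed
  have finD: "finite (desc x)" for x using descX finX finite_subset by blast
  have finC: "finite (ch x)" for x using chX finX finite_subset by blast
  have Ts_rec: "Ts x = c x + (\<Sum>z\<in>ch x. Ts z)" if "x \<in> X" for x
  proof -
    have "Ts x = c x + (\<Sum>y\<in>(\<Union>z\<in>ch x. desc z). c y)"
      unfolding Ts_def desc_dec[OF that] using notin finD finC by (simp add: sum.insert)
    also have "(\<Sum>y\<in>(\<Union>z\<in>ch x. desc z). c y) = (\<Sum>z\<in>ch x. Ts z)"
      unfolding Ts_def using sum.UNION_disjoint_family[OF finC _ disj] finD by simp
    finally show ?thesis .
  qed
  have Npos': "real N > 0" using Npos by simp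
  have cpos: "c x > 0" if "x \<in> X" for x
    using cN[OF that] Npos' by (smt (verit) divide_pos_pos)
  define fl where "fl x = \<lfloor>Ts x * real N\<rfloor>" for x
  define e where "e x = Ts x - real_of_int (fl x) / real N" for x
  define k where "k x = nat (fl x - (\<Sum>z\<in>ch x. fl z))" for x
  define lam where "lam x = 1 - e x / c x" for x
  define T where "T x y = (if y = x then lam x else if y \<in> ch x then 1 - lam y else 0)" for x y
  have e_bounds: "0 \<le> e x \<and> e x < 1 / real N" for x
  proof -
    have "real_of_int (fl x) \<le> Ts x * real N" "Ts x * real N < real_of_int (fl x) + 1"
      unfolding fl_def by linarith+
    moreover have "e x = (Ts x * real N - real_of_int (fl x)) / real N"
      unfolding e_def using Npos' by (simp add: field_simps)
    ultimately show ?thesis using Npos' by (simp add: divide_strict_right_mono)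
  qed
  have e_root: "e r = 0" if "r \<in> X" "dep r = 0" for r
  proof -
    have "desc r = {y\<in>X. (par^^dep y) y = r}" unfolding desc_def using that by auto
    then have "Ts r * real N \<in> \<int>" unfolding Ts_def using root[OF that] by simp
    then obtain m where m: "Ts r * real N = real_of_int m" by (auto elim: Ints_cases)
    then have "fl r = m" unfolding fl_def by simp
    then show ?thesis unfolding e_def using m Npos' by (simp add: field_simps)
  qed
  have lam_bounds: "0 \<le> lam x \<and> lam x \<le> 1" if "x \<in> X" for x
  proof -
    have "e x \<le> c x" using e_bounds[of x] cN[OF that] by linarith
    then show ?thesis unfolding lam_def using e_bounds[of x] cpos[OF that]
      by (simp add: field_simps)
  qed
  have k_pos: "k x > 0" if xX: "x \<in> X" for x
  proof -
    have "c x * real N \<ge> 1" using cN[OF xX] Npos' by (simp add: field_simps)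
    then have "Ts x * real N \<ge> 1 + (\<Sum>z\<in>ch x. Ts z * real N)"
      using Ts_rec[OF xX] by (simp add: algebra_simps sum_distrib_left)
    then have "fl x \<ge> \<lfloor>1 + (\<Sum>z\<in>ch x. Ts z * real N)\<rfloor>" unfolding fl_def by (rule floor_mono)
    also have "\<lfloor>1 + (\<Sum>z\<in>ch x. Ts z * real N)\<rfloor> = 1 + \<lfloor>(\<Sum>z\<in>ch x. Ts z * real N)\<rfloor>"
      by (metis add.commute one_add_floor)
    finally have "fl x \<ge> 1 + (\<Sum>z\<in>ch x. fl z)"
      using sum_floor_le[OF finC, of "\<lambda>z. Ts z * real N" x] unfolding fl_def by linarith
    then show ?thesis unfolding k_def by simp
  qed
  have x_notin_ch: "x \<notin> ch x" for x using dep_ch[of x x] by auto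
  have T_split: "T x y = (if y = x then lam x else 0) + (if y \<in> ch x then 1 - lam y else 0)" for x y
    using x_notin_ch[of x] unfolding T_def by auto
  show ?thesis
  proof (intro exI[of _ k] exI[of _ T] conjI ballI)
    fix x assume "x \<in> X" then show "k x > 0" by (rule k_pos)
  next
    fix x y assume xX: "x \<in> X" and yX: "y \<in> X"
    show "T x y \<ge> 0" using lam_bounds[OF xX] lam_bounds[OF yX] unfolding T_def by auto
    show "T x y \<noteq> 0 \<longrightarrow> y = x \<or> (par y = x \<and> dep y > 0)"
      unfolding T_def ch_def by auto
  next
    fix y assume yX: "y \<in> X"
    have cheq: "(y \<in> ch x) = (x = par y \<and> dep y > 0)" for x
      unfolding ch_def using yX by auto
    have "(\<Sum>x\<in>X. T x y) = (\<Sum>x\<in>X. (if x = y then lam y else 0) + (if par y = x \<and> dep y > 0 then 1 - lam y else 0))"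
      by (rule sum.cong) (auto simp: T_split cheq)
    also have "\<dots> = lam y + (if dep y > 0 then 1 - lam y else 0)"
    proof -
      have s1: "(\<Sum>x\<in>X. if x = y then lam y else 0) = lam y" using yX finX by simp
      have s2: "(\<Sum>x\<in>X. if par y = x \<and> dep y > 0 then 1 - lam y else 0) = (if dep y > 0 then 1 - lam y else 0)"
        using parX[OF yX] finX by (cases "dep y > 0") simp_all
      show ?thesis unfolding sum.distrib s1 s2 ..
    qed
    also have "\<dots> = 1" using e_root[OF yX] unfolding lam_def by auto
    finally show "(\<Sum>x\<in>X. T x y) = 1" .
  next
    fix x assume xX: "x \<in> X"
    have "(\<Sum>y\<in>X. T x y * c y) = (\<Sum>y\<in>X. (if y = x then lam x * c x else 0) + (if y \<in> ch x then (1 - lam y) * c y else 0))"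
      by (rule sum.cong) (auto simp: T_split algebra_simps)
    also have "\<dots> = lam x * c x + (\<Sum>y\<in>ch x. (1 - lam y) * c y)"
      using xX finX chX[of x] by (simp add: sum.distrib sum.If_cases Int_absorb1)
    also have "\<dots> = c x - e x + (\<Sum>y\<in>ch x. e y)"
    proof -
      have a: "lam x * c x = c x - e x" using cpos[OF xX] unfolding lam_def by (simp add: field_simps)
      have b: "(1 - lam y) * c y = e y" if "y \<in> ch x" for y
        using cpos[of y] chX[of x] that unfolding lam_def by (auto simp: field_simps)
      show ?thesis using a b by simp
    qed
    also have "\<dots> = real_of_int (fl x) / real N - (\<Sum>y\<in>ch x. real_of_int (fl y) / real N)"
      using Ts_rec[OF xX] unfolding e_def by (simp add: sum_subtractf)
    also have "\<dots> = real (k x) / real N"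
    proof -
      have "fl x - (\<Sum>z\<in>ch x. fl z) > 0" using k_pos[OF xX] unfolding k_def by simp
      then have "real (k x) = real_of_int (fl x) - (\<Sum>z\<in>ch x. real_of_int (fl z))"
        unfolding k_def by simp
      then show ?thesis by (simp add: diff_divide_distrib sum_divide_distrib)
    qed
    finally show "(\<Sum>y\<in>X. T x y * c y) = real (k x) / real N" .
  qed
qed





theorem lemma3:
  fixes \<nu> :: "'a::{topological_group_add, t2_space} measure"
    and U :: "'a set"
  assumes "compact (UNIV :: 'a set)"
    and "\<not> discrete_top TYPE('a)"
    and "normalized_haar \<nu>"
    and "open U" and "0 \<in> U"
  shows "\<exists>H. finite H \<and>
           (\<Union>h\<in>H. (\<lambda>u. h + u) ` U) = UNIV \<and>
           (\<forall>I \<subseteq> H. measure \<nu> (\<Union>h\<in>I. (\<lambda>u. h + u) ` U) \<ge> real (card I) / real (card H))"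
proof -
  note cpt = assms(1) and nd = assms(2) and oU = assms(4) and U0 = assms(5)
  from assms(3) have P: "prob_space \<nu>" and sets_eq: "sets \<nu> = sets borel"
    and inv: "\<And>g A. A \<in> sets borel \<Longrightarrow> emeasure \<nu> ((\<lambda>x. g + x) ` A) = emeasure \<nu> A"
    unfolding normalized_haar_def by auto
  interpret prob_space \<nu> by (rule P)
  have spaceU: "space \<nu> = UNIV" using sets_eq_imp_space_eq[OF sets_eq] by simp
  have meas_open: "A \<in> sets \<nu>" if "open A" for A using sets_eq that by simp
  have minv: "measure \<nu> ((\<lambda>x. g + x) ` A) = measure \<nu> A" if "open A" for g A
    using inv[of A g] that by (simp add: measure_def)
  have mUNIV: "measure \<nu> UNIV = 1" using prob_space spaceU by simp
  obtain W where W: "open W \<and> 0 \<in> W \<and> (\<forall>x\<in>W. -x \<in> W) \<and>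
     (\<forall>a\<in>W. \<forall>b\<in>W. \<forall>c\<in>W. \<forall>d\<in>W. \<forall>e\<in>W. a + (b + (c + (d + e))) \<in> U)"
    using small_nbhd[OF oU U0] by (rule exE)
  have oW: "open W" and W0: "0 \<in> W" using W by simp_all
  have Wsym: "-x \<in> W" if "x \<in> W" for x using W that by simp
  have W5: "a + (b + (c + (d + e))) \<in> U" if "a\<in>W" "b\<in>W" "c\<in>W" "d\<in>W" "e\<in>W" for a b c d e
    using W that by simp
  define Wt where "Wt x = (\<lambda>w. x + w) ` W" for x
  have oWt: "open (Wt x)" for x unfolding Wt_def using open_transl[OF oW] .
  have xWt: "x \<in> Wt x" for x unfolding Wt_def using W0 by (auto intro: image_eqI[of _ _ 0])
  have inf_Wt: "infinite (Wt x)" for x using open_infinite[OF nd oWt xWt] .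
  have mWt: "measure \<nu> (Wt x) = measure \<nu> W" for x unfolding Wt_def using minv[OF oW] .
  define S where "S = {sum_list ws | ws. set ws \<subseteq> W}"
  have S0: "0 \<in> S" unfolding S_def by (auto intro: exI[of _ "[]"])
  have SW: "s + w \<in> S" if "s \<in> S" "w \<in> W" for s w
  proof -
    have "\<exists>ws. s = sum_list ws \<and> set ws \<subseteq> W" using that(1) unfolding S_def by blast
    then obtain ws where "set ws \<subseteq> W" "s = sum_list ws" by blast
    then have "set (ws @ [w]) \<subseteq> W" "s + w = sum_list (ws @ [w])" using that by auto
    then show ?thesis unfolding S_def by blast
  qed
  have WS: "W \<subseteq> S" using SW[OF S0] by auto
  have Slist: "set ws \<subseteq> W \<longrightarrow> s + sum_list ws \<in> S" if "s \<in> S" for s ws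
  proof (induction ws rule: rev_induct)
    case Nil then show ?case using that by simp
  next
    case (snoc w ws) then show ?case using SW by (auto simp: add.assoc[symmetric])
  qed
  have Sadd: "s + t \<in> S" if "s \<in> S" "t \<in> S" for s t
    using that(2) Slist[OF that(1)] unfolding S_def by auto
  have Sneg: "-s \<in> S" if "s \<in> S" for s
  proof -
    have "\<exists>ws. s = sum_list ws \<and> set ws \<subseteq> W" using that(1) unfolding S_def by blast
    then obtain ws where ws: "set ws \<subseteq> W" "s = sum_list ws" by blast
    have "set ws \<subseteq> W \<longrightarrow> - sum_list ws \<in> S" for ws
    proof (induction ws)
      case Nil then show ?case using S0 by simp
    next
      case (Cons a ws)
      show ?case
      proof
        assume h: "set (a # ws) \<subseteq> W"
        then have "- sum_list ws \<in> S" "-a \<in> W" using Cons Wsym by auto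
        then have i: "- sum_list ws + -a \<in> S" by (rule SW)
        have eq: "- sum_list (a # ws) = - sum_list ws + -a" by (simp add: minus_add)
        show "- sum_list (a # ws) \<in> S" unfolding eq by (rule i)
      qed
    qed
    then show ?thesis using ws by simp
  qed
  define W3 where "W3 = {p + (q + t) | p q t. p \<in> W \<and> q \<in> W \<and> t \<in> W}"
  have W3S: "W3 \<subseteq> S" unfolding W3_def using Sadd WS by blast
  have W3I: "p + (q + t) \<in> W3" if "p \<in> W" "q \<in> W" "t \<in> W" for p q t
    unfolding W3_def using that by blast
  define cos where "cos x = {y. -x + y \<in> S}" for x
  have cos_eq: "cos x = cos y \<longleftrightarrow> -x + y \<in> S" for x y
  proof
    assume "cos x = cos y"
    moreover have "y \<in> cos y" unfolding cos_def using S0 by simp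
    ultimately show "-x + y \<in> S" unfolding cos_def by auto
  next
    assume a: "-x + y \<in> S"
    have b: "-y + x \<in> S" using Sneg[OF a] by (simp add: minus_add)
    show "cos x = cos y"
    proof (intro set_eqI iffI)
      fix z assume "z \<in> cos x"
      then have z: "-x + z \<in> S" unfolding cos_def by simp
      have "(-y + x) + (-x + z) \<in> S" by (rule Sadd[OF b z])
      then show "z \<in> cos y" unfolding cos_def by (simp add: add.assoc)
    next
      fix z assume "z \<in> cos y"
      then have z: "-y + z \<in> S" unfolding cos_def by simp
      have "(-x + y) + (-y + z) \<in> S" by (rule Sadd[OF a z])
      then show "z \<in> cos x" unfolding cos_def by (simp add: add.assoc)
    qed
  qed
  have in_cos: "y \<in> cos x \<longleftrightarrow> cos x = cos y" for x y
  proof -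
    have "y \<in> cos x \<longleftrightarrow> -x + y \<in> S" unfolding cos_def by simp
    then show ?thesis using cos_eq[of x y] by simp
  qed
  have Wt_cos: "Wt x \<subseteq> cos x" for x unfolding Wt_def cos_def using WS by auto
  have cos_img: "cos x = (\<lambda>s. x + s) ` S" for x
  proof (intro set_eqI iffI)
    fix y assume "y \<in> cos x"
    then have "-x + y \<in> S" "y = x + (-x + y)" unfolding cos_def by auto
    then show "y \<in> (\<lambda>s. x + s) ` S" by blast
  qed (auto simp: cos_def)
  have oS: "open S"
  proof -
    have "S = (\<Union>s\<in>S. Wt s)"
    proof (intro equalityI subsetI)
      fix s assume "s \<in> S" then show "s \<in> (\<Union>s\<in>S. Wt s)" using xWt[of s] by blast
    next
      fix t assume "t \<in> (\<Union>s\<in>S. Wt s)"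
      then obtain s w where "s \<in> S" "w \<in> W" "t = s + w" unfolding Wt_def by blast
      then show "t \<in> S" using SW by simp
    qed
    then show ?thesis using oWt by (metis open_UN)
  qed
  have ocos: "open (cos x)" for x unfolding cos_img using open_transl[OF oS] .
  have mcos: "measure \<nu> (cos x) = measure \<nu> S" for x unfolding cos_img using minv[OF oS] .
  have xcos: "x \<in> cos x" for x using in_cos by simp
  have "\<exists>Y. finite Y \<and> UNIV \<subseteq> (\<Union>y\<in>Y. cos y)"
    apply (rule compactE_image[OF cpt, of UNIV cos])
      apply (simp add: ocos)
     apply (use xcos in blast)
    apply blast
    done
  then obtain Y where finY: "finite Y" and covY: "UNIV \<subseteq> (\<Union>y\<in>Y. cos y)" by blast
  define CC where "CC = cos ` Y"
  have finCC: "finite CC" unfolding CC_def using finY by simp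
  have UCC: "(\<Union>C\<in>CC. C) = UNIV" unfolding CC_def using covY by auto
  have disjCC: "disjoint_family_on (\<lambda>C. C) CC"
    unfolding disjoint_family_on_def CC_def
  proof (intro ballI impI)
    fix C D assume "C \<in> cos ` Y" "D \<in> cos ` Y" "C \<noteq> D"
    then obtain a b where "C = cos a" "D = cos b" "cos a \<noteq> cos b" by auto
    then show "C \<inter> D = {}" using in_cos by auto
  qed
  have "measure \<nu> (\<Union>C\<in>CC. C) = (\<Sum>C\<in>CC. measure \<nu> C)"
    by (rule measure_finite_Union[OF finCC _ disjCC])
       (auto simp: CC_def ocos meas_open emeasure_finite)
  also have "\<dots> = (\<Sum>C\<in>CC. measure \<nu> S)"
    by (rule sum.cong) (auto simp: CC_def mcos)
  finally have nS: "real (card CC) * measure \<nu> S = 1" using UCC mUNIV by simp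
  define n where "n = card CC"
  have npos: "n > 0" using nS unfolding n_def by (cases "card CC") auto
  have "\<exists>X. finite X \<and> UNIV \<subseteq> (\<Union>x\<in>X. Wt x)"
    apply (rule compactE_image[OF cpt, of UNIV Wt])
      apply (simp add: oWt)
     apply (use xWt in blast)
    apply blast
    done
  then obtain X where finX: "finite X" and covX: "UNIV \<subseteq> (\<Union>x\<in>X. Wt x)" by blast
  have covX': "\<exists>x\<in>X. g \<in> Wt x" for g using covX by auto
  have Xne: "X \<noteq> {}" using covX by auto
  have cardX: "card X > 0" using finX Xne by (simp add: card_gt_0_iff)
  define m where "m g = (\<Sum>x\<in>X. indicator (Wt x) g :: real)" for g
  have m_ge1: "m g \<ge> 1" for g
  proof -
    obtain x where "x \<in> X" "g \<in> Wt x" using covX' by blast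
    then have "indicator (Wt x) g \<le> m g" unfolding m_def
      by (intro member_le_sum) (auto simp: finX)
    then show ?thesis using \<open>g \<in> Wt x\<close> by simp
  qed
  have m_le: "m g \<le> real (card X)" for g
  proof -
    have "m g \<le> (\<Sum>x\<in>X. 1)" unfolding m_def by (rule sum_mono) (simp add: indicator_def)
    then show ?thesis by simp
  qed
  define \<phi> where "\<phi> y g = indicator (Wt y) g / m g" for y g
  have \<phi>_nn: "\<phi> y g \<ge> 0" for y g unfolding \<phi>_def using m_ge1[of g] by simp
  have \<phi>_le1: "\<phi> y g \<le> 1" for y g unfolding \<phi>_def using m_ge1[of g] by (simp add: indicator_def)
  have \<phi>_supp: "\<phi> y g \<noteq> 0 \<Longrightarrow> g \<in> Wt y" for y g unfolding \<phi>_def by (auto simp: indicator_def)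
  have m_meas: "m \<in> borel_measurable \<nu>" unfolding m_def
    by (intro borel_measurable_sum borel_measurable_indicator meas_open oWt)
  have \<phi>_meas: "\<phi> y \<in> borel_measurable \<nu>" for y unfolding \<phi>_def
    by (intro borel_measurable_divide borel_measurable_indicator meas_open oWt m_meas)
  have \<phi>_int: "integrable \<nu> (\<phi> y)" for y
    by (rule integrable_const_bound[where B=1]) (auto simp: \<phi>_nn \<phi>_le1 \<phi>_meas abs_of_nonneg)
  have sum\<phi>: "(\<Sum>y\<in>X. \<phi> y g) = 1" for g
    unfolding \<phi>_def sum_divide_distrib[symmetric] using m_ge1[of g] by (simp add: m_def[symmetric])
  define c where "c y = integral\<^sup>L \<nu> (\<phi> y)" for y
  have mW: "measure \<nu> W \<ge> 1 / real (card X)"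
  proof -
    have "1 = measure \<nu> (\<Union>x\<in>X. Wt x)" using covX mUNIV by (metis top.extremum_uniqueI)
    also have "\<dots> \<le> (\<Sum>x\<in>X. measure \<nu> (Wt x))"
      by (rule measure_UNION_le[OF finX]) (simp add: meas_open oWt)
    also have "\<dots> = real (card X) * measure \<nu> W" by (simp add: mWt)
    finally show ?thesis using cardX by (simp add: field_simps)
  qed
  have c_lb: "c y \<ge> 1 / real (card X)^2" for y
  proof -
    have "integral\<^sup>L \<nu> (\<lambda>g. indicator (Wt y) g / real (card X)) \<le> c y"
      unfolding c_def
    proof (rule integral_mono)
      show "integrable \<nu> (\<lambda>g. indicator (Wt y) g / real (card X))"
        by (intro integrable_divide integrable_real_indicator meas_open oWt) (simp add: less_top[symmetric])
      show "integrable \<nu> (\<phi> y)" by (rule \<phi>_int)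
      fix g
      show "indicator (Wt y) g / real (card X) \<le> \<phi> y g"
        unfolding \<phi>_def using m_le[of g] m_ge1[of g]
        by (auto simp: indicator_def intro!: divide_left_mono)
    qed
    moreover have "integral\<^sup>L \<nu> (\<lambda>g. indicator (Wt y) g / real (card X)) = measure \<nu> W / real (card X)"
      using mWt spaceU by simp
    moreover have "measure \<nu> W / real (card X) \<ge> 1 / real (card X)^2"
      using mW cardX by (simp add: field_simps power2_eq_square)
    ultimately show ?thesis by linarith
  qed
  define R where "R = {(a, b). a \<in> X \<and> b \<in> X \<and> -a + b \<in> W3}"
  have R_cos: "cos a = cos b" if "(a, b) \<in> R" for a b
    using that W3S cos_eq unfolding R_def by auto
  define \<rho> where "\<rho> x = (SOME r. r \<in> X \<and> cos r = cos x)" for x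
  have \<rho>: "\<rho> x \<in> X \<and> cos (\<rho> x) = cos x" if "x \<in> X" for x
    unfolding \<rho>_def by (rule someI[of _ x]) (use that in simp)
  have \<rho>_cos: "\<rho> x = \<rho> y" if "cos x = cos y" for x y unfolding \<rho>_def using that by simp
  have conn: "(\<rho> x, x) \<in> R\<^sup>*" if xX: "x \<in> X" for x
  proof -
    define r where "r = \<rho> x"
    have rX: "r \<in> X" and rc: "cos r = cos x" using \<rho>[OF xX] unfolding r_def by auto
    define Ob where "Ob = (\<Union>y\<in>{y\<in>X. (r, y) \<in> R\<^sup>*}. Wt y)"
    have step: "set ws \<subseteq> W \<longrightarrow> r + sum_list ws \<in> Ob" for ws
    proof (induction ws rule: rev_induct)
      case Nil
      have "r \<in> Wt r" by (rule xWt)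
      then show ?case unfolding Ob_def using rX by auto
    next
      case (snoc w ws)
      show ?case
      proof
        assume h: "set (ws @ [w]) \<subseteq> W"
        then have wW: "w \<in> W" and "set ws \<subseteq> W" by auto
        then have "r + sum_list ws \<in> Ob" using snoc by simp
        then obtain y a where y: "y \<in> X" "(r, y) \<in> R\<^sup>*" and aW: "a \<in> W" and za: "r + sum_list ws = y + a"
          unfolding Ob_def Wt_def by auto
        obtain y' where y': "y' \<in> X" "r + sum_list ws + w \<in> Wt y'" using covX' by blast
        then obtain b where bW: "b \<in> W" and zb: "r + sum_list ws + w = y' + b" unfolding Wt_def by auto
        have "y' = (r + sum_list ws + w) + -b" using zb by (simp add: add.assoc del: add_uminus_conv_diff)
        also have "\<dots> = y + (a + (w + -b))" using za by (simp add: add.assoc del: add_uminus_conv_diff)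
        finally have "-y + y' = a + (w + -b)" by (simp add: add.assoc del: add_uminus_conv_diff)
        then have "-y + y' \<in> W3" using W3I[OF aW wW Wsym[OF bW]] by (simp del: add_uminus_conv_diff)
        then have "(y, y') \<in> R" unfolding R_def using y y' by simp
        then have "(r, y') \<in> R\<^sup>*" using y(2) by simp
        moreover have "r + sum_list (ws @ [w]) \<in> Wt y'" using y' by (simp add: add.assoc)
        ultimately show "r + sum_list (ws @ [w]) \<in> Ob" unfolding Ob_def using y'(1) by blast
      qed
    qed
    have "-r + x \<in> S" using rc cos_eq by simp
    then have "\<exists>ws. -r + x = sum_list ws \<and> set ws \<subseteq> W" unfolding S_def by blast
    then obtain ws where ws: "set ws \<subseteq> W" "-r + x = sum_list ws" by blast
    have "x = r + sum_list ws" using ws(2) by (metis add_minus_cancel)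
    then have "x \<in> Ob" using step[of ws] ws(1) by simp
    then obtain y a where y: "y \<in> X" "(r, y) \<in> R\<^sup>*" and aW: "a \<in> W" and xa: "x = y + a"
      unfolding Ob_def Wt_def by auto
    have "-y + x = 0 + (0 + a)" using xa by simp
    then have "-y + x \<in> W3" using W3I[OF W0 W0 aW] by simp
    then have "(y, x) \<in> R" unfolding R_def using y xX by simp
    then show ?thesis using y(2) unfolding r_def by simp
  qed
  define dep where "dep x = (LEAST k. (\<rho> x, x) \<in> R ^^ k)" for x
  define par where "par x = (if dep x = 0 then x else SOME y. (\<rho> x, y) \<in> R ^^ (dep x - 1) \<and> (y, x) \<in> R)" for x
  have dep_path: "(\<rho> x, x) \<in> R ^^ dep x" if xX: "x \<in> X" for x
  proof -
    obtain k where "(\<rho> x, x) \<in> R ^^ k" using conn[OF xX] rtrancl_imp_relpow by blast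
    then show ?thesis unfolding dep_def by (rule LeastI)
  qed
  have dep_min: "dep x \<le> k" if "(\<rho> x, x) \<in> R ^^ k" for x k
    unfolding dep_def using that by (rule Least_le)
  have par_props: "(\<rho> x, par x) \<in> R ^^ (dep x - 1) \<and> (par x, x) \<in> R" if "x \<in> X" "dep x > 0" for x
  proof -
    have "(\<rho> x, x) \<in> R ^^ Suc (dep x - 1)" using dep_path[OF that(1)] that(2) by simp
    then obtain y where "(\<rho> x, y) \<in> R ^^ (dep x - 1)" "(y, x) \<in> R" by (rule relpow_Suc_E)
    then have "\<exists>y. (\<rho> x, y) \<in> R ^^ (dep x - 1) \<and> (y, x) \<in> R" by blast
    then have "(\<rho> x, SOME y. (\<rho> x, y) \<in> R ^^ (dep x - 1) \<and> (y, x) \<in> R) \<in> R ^^ (dep x - 1) \<and>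
               (SOME y. (\<rho> x, y) \<in> R ^^ (dep x - 1) \<and> (y, x) \<in> R, x) \<in> R"
      by (rule someI_ex)
    then show ?thesis unfolding par_def using that(2) by simp
  qed
  have parX: "par x \<in> X" if "x \<in> X" for x
  proof (cases "dep x = 0")
    case True then show ?thesis using that unfolding par_def by simp
  next
    case False then show ?thesis using par_props[OF that] unfolding R_def by auto
  qed
  have \<rho>_par: "\<rho> (par x) = \<rho> x" if "x \<in> X" for x
  proof (cases "dep x = 0")
    case True then show ?thesis unfolding par_def by simp
  next
    case False
    then have "(par x, x) \<in> R" using par_props[OF that] by simp
    then have "cos (par x) = cos x" by (rule R_cos)
    then show ?thesis by (rule \<rho>_cos)
  qed
  have depP: "Suc (dep (par x)) = dep x" if "x \<in> X" "dep x > 0" for x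
  proof -
    have p: "(\<rho> (par x), par x) \<in> R ^^ (dep x - 1)" "(par x, x) \<in> R"
      using par_props[OF that] \<rho>_par[OF that(1)] by auto
    have le: "dep (par x) \<le> dep x - 1" using dep_min[OF p(1)] .
    have "(\<rho> x, par x) \<in> R ^^ dep (par x)" using dep_path[OF parX[OF that(1)]] \<rho>_par[OF that(1)] by simp
    then have "(\<rho> x, x) \<in> R ^^ Suc (dep (par x))" using p(2) by (rule relpow_Suc_I)
    then have "dep x \<le> Suc (dep (par x))" by (rule dep_min)
    then show ?thesis using le that(2) by linarith
  qed
  have root_eq: "\<rho> x = x" if "x \<in> X" "dep x = 0" for x
    using dep_path[OF that(1)] that(2) by simp
  have anc: "(par ^^ dep y) y = \<rho> y" if "y \<in> X" for y
  proof -
    have "\<forall>y. y \<in> X \<longrightarrow> dep y = n \<longrightarrow> (par ^^ n) y = \<rho> y" for n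
    proof (induction n)
      case 0 then show ?case using root_eq by auto
    next
      case (Suc n)
      show ?case
      proof (intro allI impI)
        fix y assume y: "y \<in> X" "dep y = Suc n"
        then have "dep (par y) = n" using depP[of y] by simp
        then have "(par ^^ n) (par y) = \<rho> (par y)" using Suc parX[OF y(1)] by blast
        then show "(par ^^ Suc n) y = \<rho> y" using \<rho>_par[OF y(1)] by (simp add: funpow_Suc_right del: funpow.simps)
      qed
    qed
    then show ?thesis using that by blast
  qed
  define N where "N = n * (card X)^2"
  have Npos: "N > 0" unfolding N_def using npos cardX by simp
  have cN: "c x \<ge> 1 / real N" for x
  proof -
    have "1 / real N \<le> 1 / real (card X)^2"
      unfolding N_def using npos cardX by (simp add: field_simps)
    then show ?thesis using c_lb[of x] by linarith
  qed
  have root: "(\<Sum>y\<in>{y\<in>X. (par^^dep y) y = r}. c y) * real N \<in> \<int>" if rX: "r \<in> X" "dep r = 0" for r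
  proof -
    have rr: "\<rho> r = r" using root_eq[OF rX] .
    have set_eq: "{y\<in>X. (par^^dep y) y = r} = {y\<in>X. cos y = cos r}"
    proof (intro Collect_cong conj_cong refl)
      fix y assume yX: "y \<in> X"
      show "((par^^dep y) y = r) = (cos y = cos r)"
      proof
        assume "(par^^dep y) y = r"
        then have "\<rho> y = r" using anc[OF yX] by simp
        then show "cos y = cos r" using \<rho>[OF yX] by simp
      next
        assume "cos y = cos r"
        then have "\<rho> y = \<rho> r" by (rule \<rho>_cos)
        then show "(par^^dep y) y = r" using anc[OF yX] rr by simp
      qed
    qed
    define Xr where "Xr = {y\<in>X. cos y = cos r}"
    have finXr: "finite Xr" unfolding Xr_def using finX by simp
    have fun_eq: "(\<Sum>y\<in>Xr. \<phi> y g) = indicator (cos r) g" for g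
    proof (cases "g \<in> cos r")
      case True
      have "(\<Sum>y\<in>Xr. \<phi> y g) = (\<Sum>y\<in>X. \<phi> y g)"
      proof (rule sum.mono_neutral_left[OF finX])
        show "Xr \<subseteq> X" unfolding Xr_def by auto
        show "\<forall>i\<in>X - Xr. \<phi> i g = 0"
        proof
          fix i assume i: "i \<in> X - Xr"
          show "\<phi> i g = 0"
          proof (rule ccontr)
            assume "\<phi> i g \<noteq> 0"
            then have "g \<in> cos i" using \<phi>_supp Wt_cos by blast
            then have "cos i = cos r" using True in_cos by simp
            then show False using i unfolding Xr_def by simp
          qed
        qed
      qed
      then show ?thesis using sum\<phi> True by simp
    next
      case False
      have "\<phi> y g = 0" if "y \<in> Xr" for y
      proof (rule ccontr)
        assume "\<phi> y g \<noteq> 0"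
        then have "g \<in> cos y" using \<phi>_supp Wt_cos by blast
        then show False using that False in_cos unfolding Xr_def by auto
      qed
      then show ?thesis using False by simp
    qed
    have "(\<Sum>y\<in>Xr. c y) = integral\<^sup>L \<nu> (\<lambda>g. \<Sum>y\<in>Xr. \<phi> y g)"
      unfolding c_def using Bochner_Integration.integral_sum[where I=Xr and M=\<nu> and f=\<phi>] \<phi>_int by simp
    also have "\<dots> = integral\<^sup>L \<nu> (indicator (cos r))" using fun_eq by simp
    also have "\<dots> = measure \<nu> S" using mcos spaceU by simp
    finally have sXr: "(\<Sum>y\<in>Xr. c y) = measure \<nu> S" .
    have "measure \<nu> S * real N = (real n * measure \<nu> S) * real ((card X)^2)"
      unfolding N_def by (simp only: of_nat_mult mult_ac)
    also have "\<dots> = real ((card X)^2)" using nS unfolding n_def by simp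
    finally have "(\<Sum>y\<in>Xr. c y) * real N = real ((card X)^2)" using sXr by simp
    moreover have "{y\<in>X. (par^^dep y) y = r} = Xr" using set_eq unfolding Xr_def .
    ultimately show ?thesis by (simp only: Ints_of_nat)
  qed
  have ft: "\<exists>k T. (\<forall>x\<in>X. k x > (0::nat)) \<and>
     (\<forall>x\<in>X. \<forall>y\<in>X. T x y \<ge> (0::real) \<and> (T x y \<noteq> 0 \<longrightarrow> y = x \<or> (par y = x \<and> dep y > 0))) \<and>
     (\<forall>y\<in>X. (\<Sum>x\<in>X. T x y) = 1) \<and>
     (\<forall>x\<in>X. (\<Sum>y\<in>X. T x y * c y) = real (k x) / real N)"
  proof (rule forest_transport)
    show "finite X" by (rule finX)
    show "N > 0" by (rule Npos)
    fix x assume "x \<in> X"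
    then show "par x \<in> X" by (rule parX)
  next
    fix x assume "x \<in> X" "dep x > 0"
    then show "Suc (dep (par x)) = dep x" by (rule depP)
  next
    fix x assume "x \<in> X"
    show "c x \<ge> 1 / real N" by (rule cN)
  next
    fix r assume "r \<in> X" "dep r = 0"
    then show "(\<Sum>y\<in>{y\<in>X. (par^^dep y) y = r}. c y) * real N \<in> \<int>" by (rule root)
  qed
  then obtain k T where KT: "(\<forall>x\<in>X. k x > (0::nat)) \<and>
     (\<forall>x\<in>X. \<forall>y\<in>X. T x y \<ge> (0::real) \<and> (T x y \<noteq> 0 \<longrightarrow> y = x \<or> (par y = x \<and> dep y > 0))) \<and>
     (\<forall>y\<in>X. (\<Sum>x\<in>X. T x y) = 1) \<and>
     (\<forall>x\<in>X. (\<Sum>y\<in>X. T x y * c y) = real (k x) / real N)" by (elim exE) (rule that)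
  note KT1 = KT[THEN conjunct1] and KT2 = KT[THEN conjunct2, THEN conjunct1]
    and KT3 = KT[THEN conjunct2, THEN conjunct2, THEN conjunct1]
    and KT4 = KT[THEN conjunct2, THEN conjunct2, THEN conjunct2]
  have kpos: "k x > 0" if "x \<in> X" for x using bspec[OF KT1 that] .
  have Tnn: "T x y \<ge> 0" if "x \<in> X" "y \<in> X" for x y
    using bspec[OF bspec[OF KT2 that(1)] that(2)] by (rule conjunct1)
  have Tsupp: "y = x \<or> (par y = x \<and> dep y > 0)" if "x \<in> X" "y \<in> X" "T x y \<noteq> 0" for x y
    using bspec[OF bspec[OF KT2 that(1)] that(2)] that(3) by simp
  have Tcol: "(\<Sum>x\<in>X. T x y) = 1" if "y \<in> X" for y using bspec[OF KT3 that] .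
  have Trow: "(\<Sum>y\<in>X. T x y * c y) = real (k x) / real N" if "x \<in> X" for x using bspec[OF KT4 that] .
  have "\<exists>B. (\<forall>x\<in>X. B x \<subseteq> Wt x \<and> finite (B x) \<and> card (B x) = k x) \<and>
             (\<forall>x\<in>X. \<forall>y\<in>X. x \<noteq> y \<longrightarrow> B x \<inter> B y = {})"
    by (rule choose_disjoint[OF finX inf_Wt])
  then obtain B where BB: "(\<forall>x\<in>X. B x \<subseteq> Wt x \<and> finite (B x) \<and> card (B x) = k x) \<and>
             (\<forall>x\<in>X. \<forall>y\<in>X. x \<noteq> y \<longrightarrow> B x \<inter> B y = {})" by (elim exE) (rule that)
  have Bsub: "B x \<subseteq> Wt x" and finB: "finite (B x)" and cardB: "card (B x) = k x" if "x \<in> X" for x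
    using bspec[OF BB[THEN conjunct1] that] by simp_all
  have Bdisj: "B x \<inter> B y = {}" if "x \<in> X" "y \<in> X" "x \<noteq> y" for x y
    using bspec[OF bspec[OF BB[THEN conjunct2] that(1)] that(2)] that(3) by simp
  define H where "H = (\<Union>x\<in>X. B x)"
  have finH: "finite H" unfolding H_def using finX finB by simp
  have H_own: "\<exists>x\<in>X. h \<in> B x" if "h \<in> H" for h using that unfolding H_def by blast
  define \<psi> where "\<psi> x g = (\<Sum>y\<in>X. T x y * \<phi> y g)" for x g
  define w where "w h g = (\<Sum>x\<in>X. indicator (B x) h * (\<psi> x g / real (k x)))" for h g
  have w_own: "w h g = \<psi> x g / real (k x)" if xX: "x \<in> X" and hB: "h \<in> B x" for x h g
  proof -
    have "w h g = (\<Sum>x'\<in>X. if x' = x then \<psi> x' g / real (k x') else 0)"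
      unfolding w_def
    proof (rule sum.cong[OF refl])
      fix x' assume x'X: "x' \<in> X"
      show "indicator (B x') h * (\<psi> x' g / real (k x')) = (if x' = x then \<psi> x' g / real (k x') else 0)"
      proof (cases "x' = x")
        case True then show ?thesis using hB by simp
      next
        case False
        then have "h \<notin> B x'" using Bdisj[OF x'X xX False] hB by blast
        then show ?thesis using False by simp
      qed
    qed
    also have "\<dots> = \<psi> x g / real (k x)" using xX finX by simp
    finally show ?thesis .
  qed
  have \<psi>_int: "integrable \<nu> (\<psi> x)" for x
    unfolding \<psi>_def by (intro Bochner_Integration.integrable_sum integrable_mult_right \<phi>_int)
  have w_int: "integrable \<nu> (w h)" for h
    unfolding w_def by (intro Bochner_Integration.integrable_sum integrable_mult_right integrable_divide \<psi>_int)
  have int_\<psi>: "integral\<^sup>L \<nu> (\<psi> x) = real (k x) / real N" if xX: "x \<in> X" for x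
  proof -
    have "integral\<^sup>L \<nu> (\<psi> x) = (\<Sum>y\<in>X. integral\<^sup>L \<nu> (\<lambda>g. T x y * \<phi> y g))"
      unfolding \<psi>_def by (rule Bochner_Integration.integral_sum) (intro integrable_mult_right \<phi>_int)
    also have "\<dots> = (\<Sum>y\<in>X. T x y * c y)" unfolding c_def by (simp add: \<phi>_int)
    finally show ?thesis using Trow[OF xX] by simp
  qed
  have int_w: "integral\<^sup>L \<nu> (w h) = 1 / real N" if hH: "h \<in> H" for h
  proof -
    obtain x where xX: "x \<in> X" and hB: "h \<in> B x" using H_own[OF hH] by blast
    have "w h = (\<lambda>g. \<psi> x g / real (k x))" using w_own[OF xX hB] by (intro ext)
    then have "integral\<^sup>L \<nu> (w h) = integral\<^sup>L \<nu> (\<psi> x) / real (k x)" by simp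
    also have "\<dots> = 1 / real N" using int_\<psi>[OF xX] kpos[OF xX] by simp
    finally show ?thesis .
  qed
  have \<psi>_nn: "\<psi> x g \<ge> 0" if "x \<in> X" for x g
    unfolding \<psi>_def by (intro sum_nonneg mult_nonneg_nonneg Tnn[OF that] \<phi>_nn)
  have w_nn: "w h g \<ge> 0" for h g
    unfolding w_def by (intro sum_nonneg mult_nonneg_nonneg divide_nonneg_nonneg \<psi>_nn) auto
  have sum_w: "(\<Sum>h\<in>H. w h g) = 1" for g
  proof -
    have inner: "(\<Sum>h\<in>H. indicator (B x) h * (\<psi> x g / real (k x))) = \<psi> x g" if xX: "x \<in> X" for x
    proof -
      have "(\<Sum>h\<in>H. indicator (B x) h * (\<psi> x g / real (k x))) = (\<Sum>h\<in>H. indicator (B x) h) * (\<psi> x g / real (k x))"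
        by (rule sum_distrib_right[symmetric])
      also have "(\<Sum>h\<in>H. indicator (B x) h :: real) = real (card (H \<inter> B x))"
      proof -
        have "(\<Sum>h\<in>H \<inter> B x. 1 :: real) = (\<Sum>h\<in>H. indicator (B x) h)"
          by (subst sum.inter_restrict[OF finH]) (simp add: indicator_def of_bool_def)
        then show ?thesis by simp
      qed
      also have "H \<inter> B x = B x" unfolding H_def using xX by blast
      finally show ?thesis using cardB[OF xX] kpos[OF xX] by simp
    qed
    have "(\<Sum>h\<in>H. w h g) = (\<Sum>x\<in>X. \<Sum>h\<in>H. indicator (B x) h * (\<psi> x g / real (k x)))"
      unfolding w_def by (rule sum.swap)
    also have "\<dots> = (\<Sum>x\<in>X. \<psi> x g)" using inner by simp
    also have "\<dots> = (\<Sum>y\<in>X. \<Sum>x\<in>X. T x y * \<phi> y g)" unfolding \<psi>_def by (rule sum.swap)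
    also have "\<dots> = (\<Sum>y\<in>X. (\<Sum>x\<in>X. T x y) * \<phi> y g)" by (simp add: sum_distrib_right)
    also have "\<dots> = (\<Sum>y\<in>X. \<phi> y g)" using Tcol by simp
    also have "\<dots> = 1" by (rule sum\<phi>)
    finally show ?thesis .
  qed
  have supp: "g \<in> (\<lambda>u. h + u) ` U" if hH: "h \<in> H" and nz: "w h g \<noteq> 0" for h g
  proof -
    obtain x where xX: "x \<in> X" and hB: "h \<in> B x" using H_own[OF hH] by blast
    have "\<psi> x g \<noteq> 0" using nz w_own[OF xX hB] by auto
    then obtain y where yX: "y \<in> X" and nz2: "T x y * \<phi> y g \<noteq> 0"
      unfolding \<psi>_def by (meson sum.neutral)
    have Txy: "T x y \<noteq> 0" and \<phi>nz: "\<phi> y g \<noteq> 0" using nz2 by auto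
    have t: "-x + y \<in> W3"
    proof (cases "y = x")
      case True
      then show ?thesis using W3I[OF W0 W0 W0] by simp
    next
      case False
      then have "par y = x" "dep y > 0" using Tsupp[OF xX yX Txy] by auto
      then have "(x, y) \<in> R" using par_props[OF yX] by auto
      then show ?thesis unfolding R_def by simp
    qed
    then obtain p q r where pqr: "p \<in> W" "q \<in> W" "r \<in> W" "-x + y = p + (q + r)" unfolding W3_def by blast
    obtain d where dW: "d \<in> W" and hd: "h = x + d" using Bsub[OF xX] hB unfolding Wt_def by blast
    obtain v where vW: "v \<in> W" and gv: "g = y + v" using \<phi>_supp[OF \<phi>nz] unfolding Wt_def by blast
    have "p + (q + (r + v)) = (-x + y) + v" using pqr(4) by (simp add: add.assoc)
    then have "h + (-d + (p + (q + (r + v)))) = x + ((-x + y) + v)"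
      using hd by (simp add: add.assoc)
    also have "\<dots> = g" using gv by (simp add: add.assoc[symmetric])
    finally have geq: "g = h + (-d + (p + (q + (r + v))))" by simp
    have "-d + (p + (q + (r + v))) \<in> U" by (rule W5[OF Wsym[OF dW] pqr(1,2,3) vW])
    then show ?thesis using geq by blast
  qed
  have cover: "(\<Union>h\<in>H. (\<lambda>u. h + u) ` U) = UNIV"
  proof (intro equalityI subsetI)
    fix g :: 'a
    obtain x where xX: "x \<in> X" and gx: "g \<in> Wt x" using covX' by blast
    have "B x \<noteq> {}" using cardB[OF xX] kpos[OF xX] by auto
    then obtain h where hB: "h \<in> B x" by blast
    then have hH: "h \<in> H" unfolding H_def using xX by blast
    obtain d where dW: "d \<in> W" and hd: "h = x + d" using Bsub[OF xX] hB unfolding Wt_def by blast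
    obtain v where vW: "v \<in> W" and gv: "g = x + v" using gx unfolding Wt_def by blast
    have "-d + (v + (0 + (0 + 0))) \<in> U" by (rule W5[OF Wsym[OF dW] vW W0 W0 W0])
    moreover have "g = h + (-d + (v + (0 + (0 + 0))))" using hd gv by (simp add: add.assoc)
    ultimately show "g \<in> (\<Union>h\<in>H. (\<lambda>u. h + u) ` U)" using hH by blast
  qed simp
  have cardH: "real (card H) = real N"
  proof -
    have "1 = integral\<^sup>L \<nu> (\<lambda>g. \<Sum>h\<in>H. w h g)" using sum_w prob_space by simp
    also have "\<dots> = (\<Sum>h\<in>H. integral\<^sup>L \<nu> (w h))"
      by (rule Bochner_Integration.integral_sum) (rule w_int)
    also have "\<dots> = (\<Sum>h\<in>H. 1 / real N)" using int_w by simp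
    also have "\<dots> = real (card H) / real N" by simp
    finally show ?thesis using Npos by (simp add: field_simps)
  qed
  have hall: "measure \<nu> (\<Union>h\<in>I. (\<lambda>u. h + u) ` U) \<ge> real (card I) / real (card H)" if IH: "I \<subseteq> H" for I
  proof -
    define IU where "IU = (\<Union>h\<in>I. (\<lambda>u. h + u) ` U)"
    have oIU: "open IU" unfolding IU_def using open_transl[OF oU] by (intro open_UN) auto
    have finI: "finite I" using finH IH by (rule finite_subset[rotated])
    have "integral\<^sup>L \<nu> (\<lambda>g. \<Sum>h\<in>I. w h g) \<le> integral\<^sup>L \<nu> (indicator IU)"
    proof (rule integral_mono)
      show "integrable \<nu> (\<lambda>g. \<Sum>h\<in>I. w h g)" by (intro Bochner_Integration.integrable_sum w_int)
      show "integrable \<nu> (indicator IU :: 'a \<Rightarrow> real)"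
        by (intro integrable_real_indicator meas_open oIU) (simp add: less_top[symmetric])
      fix g
      show "(\<Sum>h\<in>I. w h g) \<le> indicator IU g"
      proof (cases "g \<in> IU")
        case True
        have "(\<Sum>h\<in>I. w h g) \<le> (\<Sum>h\<in>H. w h g)" by (rule sum_mono2[OF finH IH w_nn])
        then show ?thesis using True sum_w by simp
      next
        case False
        have "w h g = 0" if "h \<in> I" for h
        proof (rule ccontr)
          assume "w h g \<noteq> 0"
          then have "g \<in> (\<lambda>u. h + u) ` U" using supp IH that by blast
          then show False using False that unfolding IU_def by blast
        qed
        then show ?thesis using False by simp
      qed
    qed
    also have "\<dots> = measure \<nu> IU" using spaceU by simp
    finally have "measure \<nu> IU \<ge> integral\<^sup>L \<nu> (\<lambda>g. \<Sum>h\<in>I. w h g)" .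
    moreover have "integral\<^sup>L \<nu> (\<lambda>g. \<Sum>h\<in>I. w h g) = (\<Sum>h\<in>I. integral\<^sup>L \<nu> (w h))"
      by (rule Bochner_Integration.integral_sum) (rule w_int)
    moreover have "(\<Sum>h\<in>I. integral\<^sup>L \<nu> (w h)) = real (card I) / real N"
      using int_w IH by (simp add: subset_iff)
    ultimately show ?thesis unfolding IU_def using cardH by simp
  qed
  show ?thesis using finH cover hall by blast
qed


end
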